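(* Let $2<p<6$. Then $\mathsf N(1,p)=1$ and the function $\theta\mapsto\mathsf N(\theta,p)$ is decreasing on $(\vartheta(p,2),1]$.
   Context: $\vartheta(p,2)=\frac{p-2}{p}$. For $\theta\in(\vartheta(p,2),1]$ let $q^*(\theta,p)=\frac{2p\theta}{2-p(1-\theta)}$ and, for $\theta\in(0,1]$, $p>2$, $\Lambda>0$, $\mathsf K^*_{\rm CKN}(\theta,p,\Lambda)=\big[\tfrac{2p\theta+2-p}{(p-2)^2}\big]^{\frac{p-2}{2p}}\big[\tfrac{2p\theta}{2p\theta+2-p}\big]^{\theta}\big[\tfrac{p+2}{4}\big]^{\frac{6-p}{2p}}\Big[\tfrac{\sqrt\pi\,\Gamma(\frac2{p-2})}{\Gamma(\frac2{p-2}+\frac12)}\Big]^{\frac{p-2}{p}}\Lambda^{\theta-\frac{p-2}{2p}}$. Define $\mathsf N(\theta,p)=\mathsf K^*_{\rm CKN}(\theta,p,1)^{1/\theta}\big/\mathsf K^*_{\rm CKN}(1,q^*(\theta,p),1)$. *)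

theory Defs
  imports "HOL-Analysis.Analysis"
begin

definition vartheta2 :: "real \<Rightarrow> real" where
  "vartheta2 p = (p - 2) / p"

definition qstar :: "real \<Rightarrow> real \<Rightarrow> real" where
  "qstar \<theta> p = 2 * p * \<theta> / (2 - p * (1 - \<theta>))"

definition KCKN :: "real \<Rightarrow> real \<Rightarrow> real \<Rightarrow> real" where
  "KCKN \<theta> p \<Lambda> =
     ((2*p*\<theta> + 2 - p) / (p - 2)^2) powr ((p - 2) / (2*p))
   * (2*p*\<theta> / (2*p*\<theta> + 2 - p)) powr \<theta>
   * ((p + 2) / 4) powr ((6 - p) / (2*p))
   * (sqrt pi * Gamma (2 / (p - 2)) / Gamma (2 / (p - 2) + 1/2)) powr ((p - 2) / p)
   * \<Lambda> powr (\<theta> - (p - 2) / (2*p))"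

definition NN :: "real \<Rightarrow> real \<Rightarrow> real" where
  "NN \<theta> p = KCKN \<theta> p 1 powr (1 / \<theta>) / KCKN 1 (qstar \<theta> p) 1"

end

theory Submission imports Defs "HOL-Real_Asymp.Real_Asymp" begin


definition GG :: "real \<Rightarrow> real" where "GG x = sqrt pi * Gamma x / Gamma (x + 1/2)"
definition phi :: "real \<Rightarrow> real" where
  "phi x = ln x / 2 + (x - 1/2) * ln ((2*x+1)/(2*x)) + ln (GG x)"
definition DD :: "real \<Rightarrow> real" where
  "DD x = (ln (x+1) - ln x)/2 + (x+1/2)*(ln (2*x+3) - ln (2*x+2))
          - (x-1/2)*(ln (2*x+1) - ln (2*x)) + ln x - ln (x+1/2)"
definition RR :: "real \<Rightarrow> real" where "RR z = sqrt z * Gamma z / Gamma (z + 1/2)"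

lemma not_npi: "(x::real) > 0 \<Longrightarrow> x \<notin> \<int>\<^sub>\<le>\<^sub>0"
  using nonpos_Ints_nonpos[of x] by force

lemma GG_pos: "x > 0 \<Longrightarrow> GG x > 0"
  unfolding GG_def by simp

lemma phi_step: assumes "x > 0" shows "phi (x+1) = phi x + DD x"
proof -
  have g1: "Gamma (x+1) = x * Gamma x" using Gamma_plus1[OF not_npi[OF assms]] .
  have g2: "Gamma (x+1+1/2) = (x+1/2) * Gamma (x+1/2)"
    using Gamma_plus1[OF not_npi[of "x+1/2"]] assms by (simp add: add_ac)
  have "GG (x+1) = GG x * (x / (x+1/2))"
    unfolding GG_def g1 g2 using assms by (simp add: field_simps)
  hence l1: "ln (GG (x+1)) = ln (GG x) + ln x - ln (x+1/2)"
    using assms GG_pos[OF assms] by (simp add: ln_mult ln_div)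
  have l2: "ln ((2*(x+1)+1)/(2*(x+1))) = ln (2*x+3) - ln (2*x+2)"
    using assms by (simp add: ln_div algebra_simps)
  have l3: "ln ((2*x+1)/(2*x)) = ln (2*x+1) - ln (2*x)"
    using assms by (simp add: ln_div)
  show ?thesis unfolding phi_def DD_def l1 l2 l3 by (simp add: field_simps)
qed

lemma DD_deriv: assumes "x > 0"
  shows "(DD has_real_derivative (ln (2*x+3) - ln (2*x+2) - ln (2*x+1) + ln (2*x) + 2/((2*x+2)*(2*x+3)))) (at x)"
proof -
  have D: "(DD has_real_derivative
     ((1/(x+1) - 1/x)/2 + ((ln (2*x+3) - ln (2*x+2)) + (x+1/2)*(2/(2*x+3) - 2/(2*x+2)))
      - ((ln (2*x+1) - ln (2*x)) + (x-1/2)*(2/(2*x+1) - 2/(2*x))) + 1/x - 1/(x+1/2))) (at x)"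
    unfolding DD_def[abs_def] using assms
    by (auto intro!: derivative_eq_intros)
  have R: "(1/(x+1) - 1/x)/2 + (x+1/2)*(2/(2*x+3) - 2/(2*x+2)) - (x-1/2)*(2/(2*x+1) - 2/(2*x)) + 1/x - 1/(x+1/2)
      = 2/((2*x+2)*(2*x+3))"
  proof -
    have "2*x+3 \<noteq> 0" "2*x+2 \<noteq> 0" "2*x+1 \<noteq> 0" "x+1 \<noteq> 0" "x+1/2 \<noteq> 0" "x \<noteq> 0" using assms by auto
    note nz = this
    have e1: "(1/(x+1) - 1/x)/2 = -1/(2*x*(x+1))" using assms apply (simp add: divide_simps) apply (simp add: algebra_simps)? done
    have e2: "(x+1/2)*(2/(2*x+3) - 2/(2*x+2)) = -(2*x+1)/(2*(2*x+3)*(x+1))" using assms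
      apply (simp add: divide_simps) apply (simp add: algebra_simps)? done
    have e3: "(x-1/2)*(2/(2*x+1) - 2/(2*x)) = -(2*x-1)/(2*x*(2*x+1))" using assms apply (simp add: divide_simps) apply (simp add: algebra_simps)? done
    have e4: "1/x - 1/(x+1/2) = 1/(x*(2*x+1))" using assms apply (simp add: divide_simps) apply (simp add: algebra_simps)? done
    have "-1/(2*x*(x+1)) + -(2*x+1)/(2*(2*x+3)*(x+1)) - -(2*x-1)/(2*x*(2*x+1)) + 1/(x*(2*x+1)) = 2/((2*x+2)*(2*x+3))"
      using assms apply (simp add: divide_simps) apply (simp add: algebra_simps)? done
    thus ?thesis using e1 e2 e3 e4 by linarith
  qed
  show ?thesis by (rule DERIV_cong[OF D]) (use R in linarith)
qed

lemma DD_dec: assumes "0 < x" "x < y" shows "DD y < DD x"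
proof (rule DERIV_neg_imp_decreasing[OF assms(2)])
  fix z assume z: "x \<le> z" "z \<le> y"
  hence zp: "z > 0" using assms by linarith
  have e: "ln (2*z+3) - ln (2*z+2) - ln (2*z+1) + ln (2*z) = ln ((2*z+3)*(2*z)/((2*z+2)*(2*z+1)))"
    using zp by (simp add: ln_div ln_mult)
  have "ln ((2*z+3)*(2*z)/((2*z+2)*(2*z+1))) \<le> (2*z+3)*(2*z)/((2*z+2)*(2*z+1)) - 1"
    using zp by (intro ln_le_minus_one) simp
  also have "\<dots> = ((2*z+3)*(2*z) - (2*z+2)*(2*z+1))/((2*z+2)*(2*z+1))" using zp by (simp add: diff_divide_distrib)
  also have "\<dots> = - 2/((2*z+2)*(2*z+1))" by (simp add: algebra_simps)
  finally have "ln (2*z+3) - ln (2*z+2) - ln (2*z+1) + ln (2*z) + 2/((2*z+2)*(2*z+3))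
      \<le> - 2/((2*z+2)*(2*z+1)) + 2/((2*z+2)*(2*z+3))" using e by linarith
  also have "\<dots> < 0"
  proof -
    have "2/((2*z+2)*(2*z+3)) < 2/((2*z+2)*(2*z+1))"
      using zp by (intro divide_strict_left_mono mult_strict_left_mono mult_pos_pos) auto
    thus ?thesis by linarith
  qed
  finally show "\<exists>d. (DD has_real_derivative d) (at z) \<and> d < 0" using DD_deriv[OF zp] by blast
qed



lemma alg_RR:
  fixes A B P Q E f s u v w :: real
  assumes "A>0" "B>0" "P>0" "Q>0" "E>0" "f>0" "s>0" "u>0" "v>0"
  shows "w * (P * A) / (Q * B) = (A / B) * ((f * (E * s) / (Q * v)) / (f * E / (P * u))) * ((w / s) * (v / u))"
  using assms by (simp add: field_simps)

lemma RR_eq: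
  assumes x: "x > 0" and n: "n > 0"
  shows "RR (x + real n) = (Gamma x / Gamma (x+1/2)) * (Gamma_series (x+1/2) n / Gamma_series x n)
           * (sqrt ((x + real n) / real n) * ((x + real n + 1/2) / (x + real n)))"
proof -
  have gp0: "Gamma x > 0" using x by simp
  have gp1: "Gamma (x+1/2) > 0" using x by simp
  have g1: "Gamma (x + real n) = pochhammer x n * Gamma x"
    using pochhammer_Gamma[OF not_npi[OF x], of n] x gp0 by (simp add: field_simps)
  have g2': "Gamma (x + 1/2 + real n) = pochhammer (x+1/2) n * Gamma (x+1/2)"
  proof -
    have ne: "Gamma (x+1/2) \<noteq> 0" using gp1 by linarith
    have "pochhammer (x+1/2) n = Gamma (x + 1/2 + of_nat n) / Gamma (x+1/2)"
      using pochhammer_Gamma[OF not_npi[of "x+1/2"], of n] x by simp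
    thus ?thesis using ne by (simp add: eq_divide_eq)
  qed
  have g2: "Gamma (x + real n + 1/2) = pochhammer (x+1/2) n * Gamma (x+1/2)"
    using g2' by (simp add: add_ac)
  have p1: "pochhammer x n > 0" "pochhammer (x+1/2) n > 0" using x by (auto intro!: pochhammer_pos)
  have gp: "Gamma x > 0" "Gamma (x+1/2) > 0" using x by auto
  have ex: "exp ((x+1/2) * ln (real n)) = exp (x * ln (real n)) * sqrt (real n)"
  proof -
    have "exp ((x+1/2) * ln (real n)) = exp (x * ln (real n)) * exp (ln (real n) / 2)"
      by (simp add: distrib_right exp_add)
    also have "exp (ln (real n) / 2) = sqrt (real n)"
      using n by (simp add: powr_def[symmetric] powr_half_sqrt[symmetric] powr_def)
    finally show ?thesis .
  qed
  have sq: "sqrt ((x + real n) / real n) = sqrt (x + real n) / sqrt (real n)"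
    by (simp add: real_sqrt_divide)
  have nn: "sqrt (real n) > 0" "x + real n > 0" "x + real n + 1/2 > 0" using n x by auto
  define E where "E = exp (x * ln (real n))"
  have Ep: "E > 0" unfolding E_def by simp
  have hs1: "Gamma_series (x+1/2) n = fact n * (E * sqrt (real n)) / (pochhammer (x+1/2) n * (x + real n + 1/2))"
    unfolding Gamma_series_def E_def[symmetric] using ex by (simp add: pochhammer_Suc E_def add_ac)
  have hs2: "Gamma_series x n = fact n * E / (pochhammer x n * (x + real n))"
    unfolding Gamma_series_def E_def by (simp add: pochhammer_Suc)
  have fp: "fact n > (0::real)" by simp
  show ?thesis
    unfolding RR_def g1 g2 sq hs1 hs2
    by (rule alg_RR[OF gp(1) gp(2) p1(1) p1(2) Ep fp nn(1) nn(2) nn(3)])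
qed

lemma RR_lim: assumes x: "x > 0" shows "(\<lambda>n. RR (x + real n)) \<longlonglongrightarrow> 1"
proof -
  have gp: "Gamma x > 0" "Gamma (x+1/2) > 0" using x by auto
  have a: "(\<lambda>n. sqrt ((x + real n) / real n) * ((x + real n + 1/2) / (x + real n))) \<longlonglongrightarrow> 1"
    using x by real_asymp
  have "(\<lambda>n. (Gamma x / Gamma (x+1/2)) * (Gamma_series (x+1/2) n / Gamma_series x n)
           * (sqrt ((x + real n) / real n) * ((x + real n + 1/2) / (x + real n))))
        \<longlonglongrightarrow> (Gamma x / Gamma (x+1/2)) * (Gamma (x+1/2) / Gamma x) * 1"
    using gp by (intro tendsto_intros a) auto
  also have "(Gamma x / Gamma (x+1/2)) * (Gamma (x+1/2) / Gamma x) * 1 = 1" using gp by simp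
  finally have l: "(\<lambda>n. (Gamma x / Gamma (x+1/2)) * (Gamma_series (x+1/2) n / Gamma_series x n)
           * (sqrt ((x + real n) / real n) * ((x + real n + 1/2) / (x + real n)))) \<longlonglongrightarrow> 1" .
  show ?thesis
  proof (rule Lim_transform_eventually[OF l])
    show "\<forall>\<^sub>F n in sequentially. (Gamma x / Gamma (x+1/2)) * (Gamma_series (x+1/2) n / Gamma_series x n)
           * (sqrt ((x + real n) / real n) * ((x + real n + 1/2) / (x + real n))) = RR (x + real n)"
      using eventually_gt_at_top[of "0::nat"] by eventually_elim (use RR_eq[OF x] in simp)
  qed
qed

lemma phi_lim: assumes x: "x > 0" shows "(\<lambda>n. phi (x + real n)) \<longlonglongrightarrow> ln (sqrt pi) + 0 + 1/2"
proof -
  have e: "phi z = ln (sqrt pi) + ln (RR z) + (z - 1/2) * ln ((2*z+1)/(2*z))" if z: "z > 0" for z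
  proof -
    have "GG z * sqrt z = sqrt pi * RR z" unfolding GG_def RR_def by simp
    moreover have "RR z > 0" unfolding RR_def using z by simp
    ultimately have "ln (GG z) + ln (sqrt z) = ln (sqrt pi) + ln (RR z)"
    proof -
      have a1: "ln (GG z * sqrt z) = ln (GG z) + ln (sqrt z)"
        by (rule ln_mult_pos) (use z GG_pos[OF z] in auto)
      have a2: "ln (sqrt pi * RR z) = ln (sqrt pi) + ln (RR z)"
        by (rule ln_mult_pos) (use \<open>RR z > 0\<close> in auto)
      show ?thesis using a1 a2 \<open>GG z * sqrt z = sqrt pi * RR z\<close> by simp
    qed
    thus ?thesis unfolding phi_def using z by (simp add: ln_sqrt)
  qed
  have a: "(\<lambda>n. (x + real n - 1/2) * ln ((2*(x+real n)+1)/(2*(x+real n)))) \<longlonglongrightarrow> 1/2"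
    using x by (real_asymp simp: field_simps)
  have "(\<lambda>n. ln (sqrt pi) + ln (RR (x + real n)) + (x + real n - 1/2) * ln ((2*(x+real n)+1)/(2*(x+real n))))
     \<longlonglongrightarrow> ln (sqrt pi) + ln 1 + 1/2"
    by (intro tendsto_intros RR_lim x a) auto
  also have "(\<lambda>n. ln (sqrt pi) + ln (RR (x + real n)) + (x + real n - 1/2) * ln ((2*(x+real n)+1)/(2*(x+real n))))
      = (\<lambda>n. phi (x + real n))" using x by (intro ext e[symmetric]) simp
  finally show ?thesis by simp
qed

lemma phi_telescope: assumes x: "x > 0" shows "phi (x + real n) - phi x = (\<Sum>k<n. DD (x + real k))"
proof (induction n)
  case 0 then show ?case by simp
next
  case (Suc n)
  have "phi (x + real (Suc n)) = phi (x + real n + 1)" by (simp add: add_ac)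
  also have "\<dots> = phi (x + real n) + DD (x + real n)" using x by (intro phi_step) simp
  finally show ?case using Suc by simp
qed

lemma phi_mono: assumes "0 < x" "x < y" shows "phi x < phi y"
proof -
  have y: "y > 0" using assms by simp
  define S where "S n = (\<Sum>k<n. DD (x + real k) - DD (y + real k))" for n
  have eq: "S n = (phi y - phi x) + (phi (x + real n) - phi (y + real n))" for n
    unfolding S_def sum_subtractf using phi_telescope[OF assms(1), of n] phi_telescope[OF y, of n] by simp
  have "(\<lambda>n. (phi y - phi x) + (phi (x + real n) - phi (y + real n)))
      \<longlonglongrightarrow> (phi y - phi x) + ((ln (sqrt pi) + 0 + 1/2) - (ln (sqrt pi) + 0 + 1/2))"
    by (intro tendsto_intros phi_lim assms(1) y)
  hence lim: "S \<longlonglongrightarrow> phi y - phi x" unfolding eq[abs_def] by simp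
  have pos: "DD (x + real k) - DD (y + real k) > 0" for k
    using DD_dec[of "x + real k" "y + real k"] assms by simp
  have pos': "DD (y + real k) \<le> DD (x + real k)" for k using pos[of k] by simp
  have "DD x - DD y \<le> S n" if "n \<ge> 1" for n
  proof -
    have "(\<lambda>k. DD (x + real k) - DD (y + real k)) 0 \<le> S n"
      unfolding S_def using that by (intro member_le_sum) (use pos' in auto)
    thus ?thesis by simp
  qed
  hence "DD x - DD y \<le> phi y - phi x"
    by (intro tendsto_lowerbound[OF lim]) (auto simp: eventually_at_top_linorder)
  moreover have "DD y < DD x" using DD_dec assms by blast
  ultimately show ?thesis by linarith
qed



definition EE :: "real \<Rightarrow> real" where
  "EE t = ln ((2*t-1)/2) / (2*t) + ln (2*t/(2*t-1))"

lemma alg_K: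
  fixes m M t th L1 L2 L3 L4 L5 :: real
  assumes "M > 0" "th > 0" "M = m + 1" "t = M * th"
  shows "1/(2*M) * (L1 + L2) + th * L3 + (2*m-1)/(2*M) * L4 + 1/M * L5
       = th * ((L1/2 + (m-1/2)*L4 + L5) / t + (L2 / (2*t) + L3))"
proof -
  have m: "m = M - 1" using assms by simp
  show ?thesis unfolding m assms(4) using assms(1,2) by (simp add: field_simps)
qed

lemma K_log:
  assumes p: "p > 2" and th: "\<theta> > 0" and tt: "2*((2/(p-2)+1)*\<theta>) > 1"
  shows "KCKN \<theta> p 1 > 0"
    and "ln (KCKN \<theta> p 1) = \<theta> * (phi (2/(p-2)) / ((2/(p-2)+1)*\<theta>) + EE ((2/(p-2)+1)*\<theta>))"
proof -
  define m where "m = 2/(p-2)"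
  define t where "t = (m+1)*\<theta>"
  have mp: "m > 0" unfolding m_def using p by simp
  have pm: "p = 2*(m+1)/m" unfolding m_def using p by (simp add: field_simps)
  have t1: "2*t > 1" using tt unfolding t_def m_def .
  have tp: "t > 0" using t1 by simp
  have hA: "(2*p*\<theta> + 2 - p) / (p-2)^2 = m*(2*t-1)/2"
    unfolding pm t_def using mp by (simp add: field_simps power2_eq_square) (simp add: algebra_simps)?
  have n1: "2*p*\<theta> = 4*t/m" unfolding pm t_def using mp by (simp add: field_simps)
  have n2: "2*p*\<theta> + 2 - p = 2*(2*t-1)/m" unfolding pm t_def using mp by (simp add: field_simps)
  have hB: "2*p*\<theta> / (2*p*\<theta> + 2 - p) = 2*t/(2*t-1)"
    unfolding n2 unfolding n1 using mp t1 by (simp add: field_simps)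
  have hC: "(p+2)/4 = (2*m+1)/(2*m)"
    unfolding pm using mp by (simp add: field_simps) (simp add: algebra_simps)?
  have hG: "sqrt pi * Gamma (2/(p-2)) / Gamma (2/(p-2) + 1/2) = GG m"
    unfolding GG_def m_def ..
  have e1: "(p-2)/(2*p) = 1/(2*(m+1))"
    unfolding pm using mp by (simp add: field_simps) (simp add: algebra_simps)?
  have n3: "6 - p = (4*m-2)/m" unfolding pm using mp by (simp add: field_simps)
  have n4: "2*p = 4*(m+1)/m" unfolding pm using mp by (simp add: field_simps)
  have e3: "(6-p)/(2*p) = (2*m-1)/(2*(m+1))"
    unfolding n3 n4 using mp apply (simp add: divide_simps) apply (simp add: algebra_simps)? done
  have e4: "(p-2)/p = 1/(m+1)"
    unfolding pm using mp by (simp add: field_simps) (simp add: algebra_simps)?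
  have K: "KCKN \<theta> p 1 = (m*(2*t-1)/2) powr (1/(2*(m+1))) * (2*t/(2*t-1)) powr \<theta>
      * ((2*m+1)/(2*m)) powr ((2*m-1)/(2*(m+1))) * (GG m) powr (1/(m+1))"
    unfolding KCKN_def hA hB hC hG e1 e3 e4 by simp
  have pos: "m*(2*t-1)/2 > 0" "2*t/(2*t-1) > 0" "(2*m+1)/(2*m) > 0" "GG m > 0"
    using mp t1 GG_pos[OF mp] by auto
  show "KCKN \<theta> p 1 > 0" unfolding K by (intro mult_pos_pos) (use pos in auto)
  have lK: "ln (KCKN \<theta> p 1) = 1/(2*(m+1)) * ln (m*(2*t-1)/2) + \<theta> * ln (2*t/(2*t-1))
      + (2*m-1)/(2*(m+1)) * ln ((2*m+1)/(2*m)) + 1/(m+1) * ln (GG m)"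
    unfolding K using pos mp t1 tp by (simp add: ln_mult ln_powr)
  have lA: "ln (m*(2*t-1)/2) = ln m + ln ((2*t-1)/2)"
  proof -
    have "ln (m*((2*t-1)/2)) = ln m + ln ((2*t-1)/2)" by (rule ln_mult_pos) (use mp t1 in auto)
    thus ?thesis by simp
  qed
  have "ln (KCKN \<theta> p 1) = \<theta> * (phi m / t + EE t)"
  proof -
    have inst: "1/(2*(m+1)) * (ln m + ln ((2*t-1)/2)) + \<theta> * ln (2*t/(2*t-1))
       + (2*m-1)/(2*(m+1)) * ln ((2*m+1)/(2*m)) + 1/(m+1) * ln (GG m)
       = \<theta> * ((ln m/2 + (m-1/2)*ln ((2*m+1)/(2*m)) + ln (GG m)) / t
           + (ln ((2*t-1)/2) / (2*t) + ln (2*t/(2*t-1))))"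
      by (rule alg_K) (use mp th t_def in auto)
    show ?thesis unfolding lK lA phi_def EE_def by (fact inst)
  qed
  thus "ln (KCKN \<theta> p 1) = \<theta> * (phi (2/(p-2)) / ((2/(p-2)+1)*\<theta>) + EE ((2/(p-2)+1)*\<theta>))"
    unfolding t_def m_def .
qed



lemma N_log:
  assumes p: "p > 2" and th1: "vartheta2 p < \<theta>" and th2: "\<theta> \<le> 1"
  shows "NN \<theta> p > 0"
    and "ln (NN \<theta> p) = (phi (2/(p-2)) - phi ((2/(p-2)+1)*\<theta> - 1)) / ((2/(p-2)+1)*\<theta>)"
proof -
  define m where "m = 2/(p-2)"
  define s where "s = (m+1)*\<theta> - 1"
  have mp: "m > 0" unfolding m_def using p by simp
  have m1: "m + 1 = p/(p-2)" unfolding m_def using p by (simp add: field_simps)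
  have thv: "(p-2)/p < \<theta>" using th1 unfolding vartheta2_def .
  have thp: "\<theta> > 0" using thv p by (smt (verit) divide_pos_pos)
  have den: "p*\<theta> + 2 - p > 0"
  proof -
    have "p - 2 < p*\<theta>" using thv p by (simp add: divide_less_eq mult.commute)
    thus ?thesis by simp
  qed
  have sp: "s > 0"
  proof -
    have "s = (p*\<theta> + 2 - p)/(p-2)" unfolding s_def m1 using p by (simp add: field_simps)
    thus ?thesis using den p by simp
  qed
  define q where "q = qstar \<theta> p"
  have qd: "q - 2 = 2*(p-2)/(p*\<theta> + 2 - p)"
    unfolding q_def qstar_def using den p
    apply (simp add: divide_simps) apply (simp add: algebra_simps)? done
  have hs: "2/(q-2) = s"
  proof -
    have "s = (p*\<theta> + 2 - p)/(p-2)" unfolding s_def m1 using p by (simp add: field_simps)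
    thus ?thesis unfolding qd using den p by (simp add: field_simps)
  qed
  have "2*(p-2)/(p*\<theta> + 2 - p) > 0" using den p by simp
  hence q2: "q > 2" using qd by linarith
  have t1: "2*((2/(p-2)+1)*\<theta>) > 1" using sp unfolding s_def m_def by simp
  note KA = K_log[OF p thp t1]
  have t2: "2*((2/(q-2)+1)*1) > 1" using sp unfolding hs by simp
  note KB = K_log[OF q2 _ t2, simplified hs]
  have KBp: "KCKN 1 q 1 > 0" using KB(1) by simp
  have KBl: "ln (KCKN 1 q 1) = phi s / (s+1) + EE (s+1)" using KB(2) by simp
  have tt: "(2/(p-2)+1)*\<theta> = s + 1" unfolding s_def m_def by simp
  have KAl: "ln (KCKN \<theta> p 1) = \<theta> * (phi m / (s+1) + EE (s+1))"
  proof -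
    have tt': "(m+1)*\<theta> = s + 1" unfolding s_def by simp
    show ?thesis using KA(2) unfolding m_def[symmetric] tt' .
  qed
  have NN: "NN \<theta> p = KCKN \<theta> p 1 powr (1/\<theta>) / KCKN 1 q 1" unfolding NN_def q_def ..
  show "NN \<theta> p > 0" unfolding NN using KA(1) KBp by simp
  have "ln (NN \<theta> p) = (1/\<theta>) * ln (KCKN \<theta> p 1) - ln (KCKN 1 q 1)"
    unfolding NN using KA(1) KBp by (simp add: ln_div ln_powr)
  also have "\<dots> = (phi m - phi s) / (s+1)"
  proof -
    have "(1/\<theta>) * (\<theta> * (phi m / (s+1) + EE (s+1))) = phi m / (s+1) + EE (s+1)"
      using thp by simp
    moreover have "phi m / (s+1) - phi s / (s+1) = (phi m - phi s) / (s+1)"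
      by (simp add: diff_divide_distrib)
    ultimately show ?thesis unfolding KAl KBl by linarith
  qed
  finally have X: "ln (NN \<theta> p) = (phi m - phi s) / (s+1)" .
  have e1: "(m+1)*\<theta> - 1 = s" "(m+1)*\<theta> = s + 1" unfolding s_def by simp_all
  show "ln (NN \<theta> p) = (phi (2/(p-2)) - phi ((2/(p-2)+1)*\<theta> - 1)) / ((2/(p-2)+1)*\<theta>)"
    unfolding m_def[symmetric] e1 using X by simp
qed

lemma frac_ineq:
  fixes a b s1 s2 :: real
  assumes "0 < s1" "s1 < s2" "0 \<le> a" "a < b"
  shows "a/(s2+1) < b/(s1+1)"
proof -
  have "a/(s2+1) \<le> a/(s1+1)" using assms by (intro divide_left_mono) auto
  also have "\<dots> < b/(s1+1)" using assms by (intro divide_strict_right_mono) auto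
  finally show ?thesis .
qed

theorem lemma4:
  fixes p :: real
  assumes "2 < p" and "p < 6"
  shows "NN 1 p = 1 \<and>
         (\<forall>\<theta>1 \<theta>2. vartheta2 p < \<theta>1 \<and> \<theta>1 < \<theta>2 \<and> \<theta>2 \<le> 1 \<longrightarrow> NN \<theta>2 p < NN \<theta>1 p)"
proof
  define m where "m = 2/(p-2)"
  have mp: "m > 0" unfolding m_def using assms by simp
  have v1: "vartheta2 p < 1" unfolding vartheta2_def using assms by simp
  show "NN 1 p = 1"
  proof -
    have "ln (NN 1 p) = 0" using N_log(2)[OF assms(1) v1 order.refl] by simp
    thus ?thesis using N_log(1)[OF assms(1) v1 order.refl] by simp
  qed
  show "\<forall>\<theta>1 \<theta>2. vartheta2 p < \<theta>1 \<and> \<theta>1 < \<theta>2 \<and> \<theta>2 \<le> 1 \<longrightarrow> NN \<theta>2 p < NN \<theta>1 p"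
  proof (intro allI impI)
    fix \<theta>1 \<theta>2 assume h: "vartheta2 p < \<theta>1 \<and> \<theta>1 < \<theta>2 \<and> \<theta>2 \<le> 1"
    have a1: "vartheta2 p < \<theta>1" "\<theta>1 \<le> 1" and a2: "vartheta2 p < \<theta>2" "\<theta>2 \<le> 1" using h by auto
    define s1 where "s1 = (m+1)*\<theta>1 - 1"
    define s2 where "s2 = (m+1)*\<theta>2 - 1"
    have L1: "ln (NN \<theta>1 p) = (phi m - phi s1) / (s1 + 1)"
      using N_log(2)[OF assms(1) a1] unfolding s1_def m_def by simp
    have L2: "ln (NN \<theta>2 p) = (phi m - phi s2) / (s2 + 1)"
      using N_log(2)[OF assms(1) a2] unfolding s2_def m_def by simp
    have s1p: "s1 > 0"
    proof -
      have "(p-2)/p < \<theta>1" using a1 unfolding vartheta2_def by simp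
      hence "1 < (m+1)*\<theta>1" unfolding m_def using assms by (simp add: field_simps)
      thus ?thesis unfolding s1_def by simp
    qed
    have s12: "s1 < s2" unfolding s1_def s2_def using h mp by simp
    have "(m+1)*\<theta>2 \<le> (m+1)*1" using a2 mp by (intro mult_left_mono) auto
    hence s2m: "s2 \<le> m" unfolding s2_def by simp
    have "phi s1 < phi s2" using phi_mono s1p s12 by blast
    moreover have "phi s2 \<le> phi m"
      using phi_mono[of s2 m] s1p s12 s2m by (cases "s2 = m") auto
    ultimately have "ln (NN \<theta>2 p) < ln (NN \<theta>1 p)"
      unfolding L1 L2 by (intro frac_ineq s1p s12) auto
    thus "NN \<theta>2 p < NN \<theta>1 p"
      using N_log(1)[OF assms(1) a1] N_log(1)[OF assms(1) a2] by simp
  qed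
qed


end
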